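(* Let $|q|<1$ and $|qa|,|qk|<|z|$, with parameters such that no denominator in the definition of $f$ vanishes for either argument order. Then $f(a,k,z,q)=-f(k,a,z,q)$.
   Context: Notation: $(x;q)_n=(1-x)(1-xq)\cdots(1-xq^{n-1})$, $(x_1,\dots,x_m;q)_n=(x_1;q)_n\cdots(x_m;q)_n$. Define $$f(a,k,z,q):=\sum_{n=1}^{\infty}\frac{(q\sqrt{k},-q\sqrt{k},k,z,k/a;q)_{n}}{(\sqrt{k},-\sqrt{k},qk,qk/z,qa;q)_{n}(1-q^n)}\left(\frac{qa}{z}\right)^{n}.$$ *)

theory Defs
  imports "HOL-Analysis.Analysis"
begin

definition qpoch :: "complex \<Rightarrow> complex \<Rightarrow> nat \<Rightarrow> complex" where
  "qpoch x q n = (\<Prod>j<n. 1 - x * q ^ j)"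

definition f_term :: "complex \<Rightarrow> complex \<Rightarrow> complex \<Rightarrow> complex \<Rightarrow> nat \<Rightarrow> complex" where
  "f_term a k z q n =
     (qpoch (q * csqrt k) q n * qpoch (- q * csqrt k) q n * qpoch k q n * qpoch z q n * qpoch (k / a) q n)
     / (qpoch (csqrt k) q n * qpoch (- csqrt k) q n * qpoch (q * k) q n * qpoch (q * k / z) q n
        * qpoch (q * a) q n * (1 - q ^ n))
     * (q * a / z) ^ n"

definition f :: "complex \<Rightarrow> complex \<Rightarrow> complex \<Rightarrow> complex \<Rightarrow> complex" where
  "f a k z q = (\<Sum>n. f_term a k z q (Suc n))"

end

theory Submission
  imports Defs
begin
lemma qpoch_0[simp]: "qpoch x q 0 = 1" by (simp add: qpoch_def)
lemma qpoch_Suc: "qpoch x q (Suc n) = qpoch x q n * (1 - x * q ^ n)"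
  by (simp add: qpoch_def)
lemma qpoch_Suc': "qpoch x q (Suc n) = (1 - x) * qpoch (x * q) q n"
  unfolding qpoch_def prod.lessThan_Suc_shift by (simp add: algebra_simps)
lemma qpoch_add: "qpoch x q (m + n) = qpoch x q m * qpoch (x * q ^ m) q n"
  by (induction n) (auto simp: qpoch_Suc algebra_simps power_add)
lemma qpoch_nz: "qpoch x q n \<noteq> 0 \<Longrightarrow> j < n \<Longrightarrow> 1 - x * q ^ j \<noteq> 0"
  by (auto simp: qpoch_def)

lemma ratio_summable:
  fixes t :: "nat \<Rightarrow> 'a::{real_normed_field,banach}" and r :: "nat \<Rightarrow> 'a"
  assumes rec: "\<And>n. t (Suc n) = r n * t n" and lim: "r \<longlonglongrightarrow> L" and L: "norm L < 1"
  shows "summable t"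
proof -
  define c where "c = (1 + norm L) / 2"
  have "norm L < c" "c < 1" using L by (auto simp: c_def)
  have "eventually (\<lambda>n. norm (r n) < c) sequentially"
    using order_tendstoD(2)[OF tendsto_norm[OF lim] \<open>norm L < c\<close>] .
  then obtain N where N: "\<And>n. n \<ge> N \<Longrightarrow> norm (r n) < c" by (auto simp: eventually_sequentially)
  show ?thesis
  proof (rule summable_ratio_test[OF \<open>c < 1\<close>])
    fix n assume "n \<ge> N"
    then show "norm (t (Suc n)) \<le> c * norm (t n)"
      using N[of n] by (auto simp: rec norm_mult intro: mult_right_mono)
  qed
qed


lemma qpoch_sq:
  "qpoch (q * s) q n * qpoch (- q * s) q n * (1 - s^2) = qpoch s q n * qpoch (- s) q n * (1 - s^2 * (q^n)^2)"
proof (induction n)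
  case 0 then show ?case by simp
next
  case (Suc n)
  have "qpoch (q * s) q (Suc n) * qpoch (- q * s) q (Suc n) * (1 - s^2)
      = (qpoch (q * s) q n * qpoch (- q * s) q n * (1 - s^2)) * ((1 - q * s * q^n) * (1 - (- q * s) * q^n))"
    by (simp add: qpoch_Suc mult_ac)
  also have "\<dots> = qpoch s q n * qpoch (- s) q n * (1 - s^2 * (q^n)^2) * ((1 - q * s * q^n) * (1 - (- q * s) * q^n))"
    by (simp only: Suc)
  also have "\<dots> = qpoch s q n * qpoch (- s) q n * ((1 - s * q^n) * (1 - (-s) * q^n)) * (1 - s^2 * (q^Suc n)^2)"
    by (simp add: power2_eq_square algebra_simps)
  also have "\<dots> = qpoch s q (Suc n) * qpoch (- s) q (Suc n) * (1 - s^2 * (q^Suc n)^2)"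
    by (simp add: qpoch_Suc mult_ac)
  finally show ?case .
qed

lemma qpoch_k: "qpoch k q n * (1 - k * q^n) = (1 - k) * qpoch (q*k) q n"
proof (induction n)
  case 0 then show ?case by simp
next
  case (Suc n)
  have "qpoch k q (Suc n) * (1 - k * q^(Suc n)) = (qpoch k q n * (1 - k*q^n)) * (1 - k*q^Suc n)"
    by (simp add: qpoch_Suc)
  also have "\<dots> = (1 - k) * qpoch (q*k) q n * (1 - k*q^Suc n)"
    by (simp only: Suc)
  also have "\<dots> = (1 - k) * qpoch (q*k) q (Suc n)"
    by (simp add: qpoch_Suc algebra_simps)
  finally show ?case .
qed

definition Kgood where "Kgood k z q \<longleftrightarrow> q \<noteq> 0 \<and> norm q < 1 \<and> k \<noteq> 0 \<and> z \<noteq> 0 \<and> norm (q*k) < norm z \<and>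
  (\<forall>n. qpoch (csqrt k) q n \<noteq> 0 \<and> qpoch (- csqrt k) q n \<noteq> 0 \<and> qpoch (q*k) q n \<noteq> 0 \<and> qpoch (q*k/z) q n \<noteq> 0)"

definition Xgood where "Xgood x z q \<longleftrightarrow> x \<noteq> 0 \<and> norm (q*x) < norm z \<and> (\<forall>n. qpoch (q*x) q n \<noteq> 0)"

definition g where "g k z q x n = (1 - k*(q^n)^2)/(1 - k*q^n) * (qpoch z q n / qpoch (q*k/z) q n)
   * (qpoch (k/x) q n / (qpoch (q*x) q n * (1 - q^n))) * (q*x/z)^n"

lemma csq: "csqrt k * csqrt k = k"
  using power2_csqrt[of k] by (simp add: power2_eq_square)

lemma Kgood_facts:
  assumes "Kgood k z q"
  shows "1 - k*(q^j)^2 \<noteq> 0" "1 - k*q^(Suc j) \<noteq> 0" "1 - q*k/z*q^j \<noteq> 0" "1 - k \<noteq> 0"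
    "q \<noteq> 0" "norm q < 1" "k \<noteq> 0" "z \<noteq> 0" "norm (q*k) < norm z"
    "qpoch (q*k/z) q n \<noteq> 0" "qpoch (q*k) q n \<noteq> 0"
proof -
  note A = assms[unfolded Kgood_def]
  have nz: "1 - csqrt k * q^j \<noteq> 0" "1 - (- csqrt k) * q^j \<noteq> 0"
    using A qpoch_nz[of "csqrt k" q "Suc j" j] qpoch_nz[of "- csqrt k" q "Suc j" j] by auto
  have eq: "1 - k*(q^j)^2 = (1 - csqrt k * q^j) * (1 - (- csqrt k) * q^j)"
    by (simp add: algebra_simps power2_eq_square csq)
  show "1 - k*(q^j)^2 \<noteq> 0" using nz by (metis eq mult_eq_0_iff)
  have nz0: "1 - csqrt k * q^0 \<noteq> 0" "1 - (- csqrt k) * q^0 \<noteq> 0"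
    using A qpoch_nz[of "csqrt k" q "Suc 0" 0] qpoch_nz[of "- csqrt k" q "Suc 0" 0] by auto
  have eq0: "1 - k = (1 - csqrt k * q^0) * (1 - (- csqrt k) * q^0)"
    by (simp add: algebra_simps csq)
  show "1 - k \<noteq> 0" using nz0 by (metis eq0 mult_eq_0_iff)
  show "1 - k*q^(Suc j) \<noteq> 0"
    using A qpoch_nz[of "q*k" q "Suc j" j] by (auto simp: algebra_simps)
  show "1 - q*k/z*q^j \<noteq> 0"
    using A qpoch_nz[of "q*k/z" q "Suc j" j] by (auto simp: algebra_simps)
qed (use assms in \<open>auto simp: Kgood_def\<close>)

lemma Xgood_facts:
  assumes "Xgood x z q"
  shows "1 - q*x*q^j \<noteq> 0" "x \<noteq> 0" "norm (q*x) < norm z" "qpoch (q*x) q n \<noteq> 0"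
  using assms qpoch_nz[of "q*x" q "Suc j" j] by (auto simp: Xgood_def)

lemma q_nz: "norm (q::complex) < 1 \<Longrightarrow> n \<ge> 1 \<Longrightarrow> 1 - q^n \<noteq> 0"
proof
  assume "norm q < 1" "n \<ge> 1" "1 - q^n = 0"
  then have "norm (q^n) = 1" by simp
  moreover have "norm (q^n) < 1" using \<open>norm q < 1\<close> \<open>n \<ge> 1\<close>
    by (simp add: norm_power power_less_one_iff) 
  ultimately show False by simp
qed

lemma abstract_eq:
  fixes A B K QK Z QZ C X d w u v p :: complex
  assumes "A * u = B * p" "K * v = u * QK"
    "B \<noteq> 0" "QK \<noteq> 0" "QZ \<noteq> 0" "X \<noteq> 0" "d \<noteq> 0" "u \<noteq> 0" "v \<noteq> 0"
  shows "A * K * Z * C / (B * QK * QZ * X * d) * w = p / v * (Z / QZ) * (C / (X * d)) * w"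
proof -
  have a: "A = B * p / u" using assms by (simp add: field_simps)
  have b: "K = u * QK / v" using assms by (simp add: field_simps)
  show ?thesis unfolding a b using assms(3-9) by (simp add: field_simps)
qed

lemma f_term_eq:
  assumes K: "Kgood k z q" and X: "Xgood x z q" and n: "n \<ge> 1"
  shows "f_term x k z q n = g k z q x n"
proof -
  note KF = Kgood_facts[OF K] and XF = Xgood_facts[OF X]
  have s2: "(csqrt k)^2 = k" by simp
  have e1: "qpoch (q * csqrt k) q n * qpoch (- q * csqrt k) q n * (1 - k) = qpoch (csqrt k) q n * qpoch (- csqrt k) q n * (1 - k * (q^n)^2)"
    using qpoch_sq[of q "csqrt k" n] by (simp only: s2)
  have e2: "qpoch k q n * (1 - k * q^n) = (1 - k) * qpoch (q*k) q n"
    by (rule qpoch_k)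
  have nz: "1 - k*q^n \<noteq> 0" using KF(2)[of "n-1"] n by simp
  have qn: "1 - q^n \<noteq> 0" using q_nz[OF KF(6) n] .
  have nz2: "qpoch (csqrt k) q n * qpoch (- csqrt k) q n \<noteq> 0" using K by (auto simp: Kgood_def)
  show ?thesis
    unfolding f_term_def g_def
    using abstract_eq[OF e1 e2 nz2 KF(11) KF(10) XF(4) qn KF(4) nz, where Z = "qpoch z q n" and C = "qpoch (k/x) q n" and w = "(q*x/z)^n"]
    by (simp add: mult.assoc)
qed
lemma scal_abstract:
  fixes x k z q Q d1 d2 d4 d5 d6 d7 :: complex
  assumes nz: "x \<noteq> 0" "z \<noteq> 0" "q \<noteq> 0" "d1 \<noteq> 0" "d2 \<noteq> 0" "d4 \<noteq> 0" "d5 \<noteq> 0" "d7 \<noteq> 0"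
  and defs: "d1 = 1 - k*(q*Q)" "d2 = 1 - q*k/z*Q" "d4 = 1 - q*x*(q*Q)" "d5 = 1 - q*Q" "d6 = 1 - q*x" "d7 = z - x*q"
  shows "(1 - k*(q*Q)^2)/(d1*d2*d5) * ((x - k*Q)*q/z) - (1 - k*(q*Q)^2)/(d1*d2*d5) * ((x*q - k)*d6*Q*q/(z*d4))
       = -(x*q/d7)*(1-z*q*Q)*(x-k*Q)*q/(z*d2*d4) - (-(x*q/d7))"
proof -
  have L1: "(x - k*Q)*d4 - (x*q - k)*d6*Q = x*d5*d1"
    unfolding defs by (simp add: algebra_simps)
  have L2: "z*d2*d4 - (1-z*q*Q)*(x-k*Q)*q = d7*(1 - k*(q*Q)^2)"
  proof -
    have "z*d2 = z - q*k*Q" using nz unfolding defs by (simp add: field_simps)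
    then have "z*d2*d4 - (1-z*q*Q)*(x-k*Q)*q = (z - q*k*Q)*d4 - (1-z*q*Q)*(x-k*Q)*q" by simp
    also have "\<dots> = d7*(1 - k*(q*Q)^2)" unfolding defs by (simp add: algebra_simps power2_eq_square)
    finally show ?thesis .
  qed
  have A: "(1 - k*(q*Q)^2)/(d1*d2*d5) * ((x - k*Q)*q/z) - (1 - k*(q*Q)^2)/(d1*d2*d5) * ((x*q - k)*d6*Q*q/(z*d4))
      = (1 - k*(q*Q)^2)*q/(z*d1*d2*d5*d4) * ((x - k*Q)*d4 - (x*q - k)*d6*Q)"
    using nz by (simp add: field_simps)
  also have "\<dots> = (1 - k*(q*Q)^2)*q*x/(z*d2*d4)" unfolding L1 using nz by (simp add: field_simps)
  finally have A': "(1 - k*(q*Q)^2)/(d1*d2*d5) * ((x - k*Q)*q/z) - (1 - k*(q*Q)^2)/(d1*d2*d5) * ((x*q - k)*d6*Q*q/(z*d4))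
     = (1 - k*(q*Q)^2)*q*x/(z*d2*d4)" .
  have B: "-(x*q/d7)*(1-z*q*Q)*(x-k*Q)*q/(z*d2*d4) - (-(x*q/d7))
      = (x*q/d7) * (z*d2*d4 - (1-z*q*Q)*(x-k*Q)*q)/(z*d2*d4)"
    using nz by (simp add: field_simps)
  also have "\<dots> = (1 - k*(q*Q)^2)*q*x/(z*d2*d4)" unfolding L2 using nz by (simp add: field_simps)
  finally show ?thesis using A' by simp
qed

lemma tele_abstract:
  fixes x k z q Q Z K R X P d1 d2 d3 d4 d5 d6 d7 :: complex
  assumes nz: "x \<noteq> 0" "z \<noteq> 0" "q \<noteq> 0" "R \<noteq> 0" "X \<noteq> 0" "d1 \<noteq> 0" "d2 \<noteq> 0" "d3 \<noteq> 0" "d4 \<noteq> 0" "d5 \<noteq> 0" "d6 \<noteq> 0" "d7 \<noteq> 0"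
  and defs: "d1 = 1 - k*(q*Q)" "d2 = 1 - q*k/z*Q" "d3 = 1 - q*x*Q" "d4 = 1 - q*x*(q*Q)" "d5 = 1 - q*Q" "d6 = 1 - q*x" "d7 = z - x*q"
  shows "(1 - k*(q*Q)^2)/d1 * (Z*(1-z*Q)/(R*d2)) * (K*(1-k/x*Q)/(X*d3*d5)) * ((q*x/z)*P)
       - (1 - k*(q*Q)^2)/d1 * (Z*(1-z*Q)/(R*d2)) * ((1-k/(x*q))*K/(X*d3*d4/d6*d5)) * ((q*x/z)*P*(q*Q))
       = -(x*q/d7) * (Z*(1-z*Q)*(1-z*(q*Q))) * (K*(1-k/x*Q)) / ((R*d2)*(X*d3*d4)) * ((q*x/z)*P)
         - (-(x*q/d7) * (Z*(1-z*Q)) * K / (R*(X*d3)) * P)"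
proof -
  define C0 where "C0 = Z*(1-z*Q)*K*P/(R*X*d3)"
  have h1: "(1 - k*(q*Q)^2)/d1 * (Z*(1-z*Q)/(R*d2)) * (K*(1-k/x*Q)/(X*d3*d5)) * ((q*x/z)*P)
     = C0 * ((1 - k*(q*Q)^2)/(d1*d2*d5) * ((x - k*Q)*q/z))"
    unfolding C0_def using nz by (simp add: field_simps)
  have h2: "(1 - k*(q*Q)^2)/d1 * (Z*(1-z*Q)/(R*d2)) * ((1-k/(x*q))*K/(X*d3*d4/d6*d5)) * ((q*x/z)*P*(q*Q))
     = C0 * ((1 - k*(q*Q)^2)/(d1*d2*d5) * ((x*q - k)*d6*Q*q/(z*d4)))"
    unfolding C0_def using nz by (simp add: field_simps)
  have h3: "-(x*q/d7) * (Z*(1-z*Q)*(1-z*(q*Q))) * (K*(1-k/x*Q)) / ((R*d2)*(X*d3*d4)) * ((q*x/z)*P)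
     = C0 * (-(x*q/d7)*(1-z*q*Q)*(x-k*Q)*q/(z*d2*d4))"
    unfolding C0_def using nz by (simp add: field_simps)
  have h4: "-(x*q/d7) * (Z*(1-z*Q)) * K / (R*(X*d3)) * P = C0 * (-(x*q/d7))"
    unfolding C0_def using nz by (simp add: field_simps)
  note S = scal_abstract[OF nz(1,2,3,6,7,9,10,12) defs(1,2,4,5,6,7)]
  show ?thesis unfolding h1 h2 h3 h4 by (metis S right_diff_distrib)
qed

definition Gt where "Gt k z q x N = -(x*q/(z - x*q)) * qpoch z q (Suc N) * qpoch (k/x) q N
   / (qpoch (q*k/z) q N * qpoch (q*x) q (Suc N)) * (q*x/z)^N"

lemma Xgood_shift:
  assumes K: "Kgood k z q" and X: "Xgood x z q"
  shows "Xgood (x*q) z q"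
proof -
  note KF = Kgood_facts[OF K] and XF = Xgood_facts[OF X]
  have "norm (q*(x*q)) = norm q * norm (q*x)" by (simp add: norm_mult)
  also have "\<dots> \<le> norm (q*x)" using KF(6) by (simp add: mult_left_le_one_le)
  finally have n1: "norm (q*(x*q)) < norm z" using XF(3) by simp
  have "qpoch (q*(x*q)) q n \<noteq> 0" for n
  proof -
    have "qpoch (q*x) q (Suc n) = (1 - q*x) * qpoch (q*(x*q)) q n"
      by (simp add: qpoch_Suc' mult_ac)
    then show ?thesis using XF(4)[of "Suc n"] by auto
  qed
  then show ?thesis using n1 XF(2) KF(5) by (auto simp: Xgood_def)
qed

lemma tele_step:
  assumes K: "Kgood k z q" and X: "Xgood x z q"
  shows "g k z q x (Suc n) - g k z q (x*q) (Suc n) = Gt k z q x (Suc n) - Gt k z q x n"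
proof -
  note KF = Kgood_facts[OF K] and XF = Xgood_facts[OF X]
  have d6: "1 - q*x \<noteq> 0" using XF(1)[of 0] by simp
  have e3: "qpoch (k/(x*q)) q (Suc n) = (1 - k/(x*q)) * qpoch (k/x) q n"
    using KF(5) by (simp add: qpoch_Suc')
  have e4: "qpoch (q*(x*q)) q (Suc n) = qpoch (q*x) q n * (1 - q*x*q^n) * (1 - q*x*(q*q^n)) / (1 - q*x)"
  proof -
    have "qpoch (q*x) q (Suc (Suc n)) = (1 - q*x) * qpoch (q*(x*q)) q (Suc n)"
      by (simp add: qpoch_Suc' mult_ac)
    moreover have "qpoch (q*x) q (Suc (Suc n)) = qpoch (q*x) q n * (1 - q*x*q^n) * (1 - q*x*(q*q^n))"
      by (simp add: qpoch_Suc)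
    ultimately show ?thesis using d6 by (simp add: field_simps)
  qed
  have e5: "(q*(x*q)/z)^(Suc n) = (q*x/z)*(q*x/z)^n*(q*q^n)"
    by (simp add: power_mult_distrib power_divide field_simps)
  have d7: "z - x*q \<noteq> 0"
  proof
    assume "z - x*q = 0" then have "norm z = norm (q*x)" by (simp add: mult.commute)
    then show False using XF(3) by simp
  qed
  have d1: "1 - k*(q*q^n) \<noteq> 0" using KF(2)[of n] by simp
  have d4: "1 - q*x*(q*q^n) \<noteq> 0" using XF(1)[of "Suc n"] by simp
  have d5: "1 - q*q^n \<noteq> 0" using q_nz[OF KF(6), of "Suc n"] by simp
  show ?thesis
    unfolding g_def Gt_def e3 e4 e5
    unfolding qpoch_Suc power_Suc
    apply (rule tele_abstract[where Q="q^n"])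
    using XF(2) KF(8) KF(5) KF(10) XF(4) d1 KF(3)[of n] XF(1)[of n] d4 d5 d6 d7 by auto
qed

lemma Gt_ratio_abstract:
  fixes c Z a a2 K b R d X e e2 w P :: complex
  assumes "R \<noteq> 0" "d \<noteq> 0" "X \<noteq> 0" "e \<noteq> 0" "e2 \<noteq> 0"
  shows "-(c) * (Z*a*a2) * (K*b) / (R*d * (X*e*e2)) * (w*P) = (a2*b/(d*e2)*w) * (-(c) * (Z*a) * K / (R*(X*e)) * P)"
  using assms by (simp add: field_simps)

lemma Gt_lim:
  assumes K: "Kgood k z q" and X: "Xgood x z q"
  shows "Gt k z q x \<longlonglongrightarrow> 0"
proof -
  note KF = Kgood_facts[OF K] and XF = Xgood_facts[OF X]
  define r where "r n = (1 - z*(q*q^n))*(1 - k/x*q^n)/((1 - q*k/z*q^n)*(1 - q*x*(q*q^n)))*(q*x/z)" for n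
  have rec: "Gt k z q x (Suc n) = r n * Gt k z q x n" for n
  proof -
    have d4: "1 - q*x*(q*q^n) \<noteq> 0" using XF(1)[of "Suc n"] by simp
    show ?thesis unfolding Gt_def r_def qpoch_Suc power_Suc
      by (rule Gt_ratio_abstract) (use KF(10) KF(3)[of n] XF(4) XF(1)[of n] d4 in auto)
  qed
  have q0: "(\<lambda>n. q^n) \<longlonglongrightarrow> 0" using KF(6) by (rule LIMSEQ_power_zero)
  have "r \<longlonglongrightarrow> (1 - z*(q*0))*(1 - k/x*0)/((1 - q*k/z*0)*(1 - q*x*(q*0)))*(q*x/z)"
    unfolding r_def by (intro tendsto_intros q0) auto
  then have lim: "r \<longlonglongrightarrow> q*x/z" by simp
  have "norm (q*x/z) < 1" using XF(3) KF(8) by (simp add: norm_divide divide_less_eq)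
  then have "summable (Gt k z q x)" using ratio_summable[OF rec lim] by blast
  then show ?thesis by (rule summable_LIMSEQ_zero)
qed

lemma tele_sums:
  assumes K: "Kgood k z q" and X: "Xgood x z q"
  shows "(\<lambda>n. g k z q x (Suc n) - g k z q (x*q) (Suc n)) sums (- Gt k z q x 0)"
proof -
  have "(\<lambda>n. Gt k z q x (Suc n) - Gt k z q x n) sums (0 - Gt k z q x 0)"
    using telescope_sums[OF Gt_lim[OF K X]] .
  then show ?thesis using tele_step[OF K X] by simp
qed

lemma g_ratio_abstract:
  fixes N1 D1 Z a R b K c X d e w P f p i :: complex
  assumes "D1 \<noteq> 0" "b \<noteq> 0" "d \<noteq> 0" "e \<noteq> 0" "p \<noteq> 0" "f \<noteq> 0" "i \<noteq> 0" "R \<noteq> 0" "X \<noteq> 0"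
  shows "N1/D1 * (Z*a/(R*b)) * (K*c/(X*d*e)) * (w*P) = (N1*f/(D1*p) * a/b * c/d * i/e * w) * (p/f * (Z/R) * (K/(X*i)) * P)"
  using assms by (simp add: field_simps)

lemma g_rec:
  assumes K: "Kgood k z q" and X: "Xgood x z q" and m: "m \<ge> 1"
  shows "g k z q x (Suc m) = ((1 - k*(q*q^m)^2)*(1 - k*q^m)/((1 - k*(q*q^m))*(1 - k*(q^m)^2)) * (1 - z*q^m)/(1 - q*k/z*q^m)
           * (1 - k/x*q^m)/(1 - q*x*q^m) * (1 - q^m)/(1 - q*q^m) * (q*x/z)) * g k z q x m"
proof -
  note KF = Kgood_facts[OF K] and XF = Xgood_facts[OF X]
  have f: "1 - k*q^m \<noteq> 0" using KF(2)[of "m-1"] m by simp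
  have i: "1 - q^m \<noteq> 0" using q_nz[OF KF(6) m] .
  have e: "1 - q*q^m \<noteq> 0" using q_nz[OF KF(6), of "Suc m"] by simp
  have D1: "1 - k*(q*q^m) \<noteq> 0" using KF(2)[of m] by simp
  show ?thesis unfolding g_def qpoch_Suc power_Suc
    by (rule g_ratio_abstract) (use D1 KF(3)[of m] XF(1)[of m] e KF(1)[of m] f i KF(10) XF(4) in auto)
qed

lemma g_summable:
  assumes K: "Kgood k z q" and X: "Xgood x z q"
  shows "summable (\<lambda>n. g k z q x (Suc n))"
proof -
  note KF = Kgood_facts[OF K] and XF = Xgood_facts[OF X]
  define r where "r n = (let Q = q^(Suc n) in (1 - k*(q*Q)^2)*(1 - k*Q)/((1 - k*(q*Q))*(1 - k*Q^2)) * (1 - z*Q)/(1 - q*k/z*Q)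
           * (1 - k/x*Q)/(1 - q*x*Q) * (1 - Q)/(1 - q*Q) * (q*x/z))" for n
  have rec: "g k z q x (Suc (Suc n)) = r n * g k z q x (Suc n)" for n
    unfolding r_def Let_def by (rule g_rec[OF K X]) simp
  have q0: "(\<lambda>n. q^(Suc n)) \<longlonglongrightarrow> 0"
    using LIMSEQ_Suc[OF LIMSEQ_power_zero[OF KF(6)]] .
  have "r \<longlonglongrightarrow> (1 - k*(q*0)^2)*(1 - k*0)/((1 - k*(q*0))*(1 - k*0^2)) * (1 - z*0)/(1 - q*k/z*0)
           * (1 - k/x*0)/(1 - q*x*0) * (1 - 0)/(1 - q*0) * (q*x/z)"
    unfolding r_def Let_def by (intro tendsto_intros q0) auto
  then have lim: "r \<longlonglongrightarrow> q*x/z" by simp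
  have "norm (q*x/z) < 1" using XF(3) KF(8) by (simp add: norm_divide divide_less_eq)
  then show ?thesis using ratio_summable[of "\<lambda>n. g k z q x (Suc n)", OF rec lim] by blast
qed

lemma f_eq:
  assumes K: "Kgood k z q" and X: "Xgood x z q"
  shows "f x k z q = (\<Sum>n. g k z q x (Suc n))"
  unfolding f_def using f_term_eq[OF K X] by simp

definition cc where "cc z q x = x*q/(z - x*q) * (1 - z)/(1 - q*x)"

lemma Gt0: "- Gt k z q x 0 = cc z q x"
  by (simp add: Gt_def cc_def qpoch_Suc)

lemma f_step:
  assumes K: "Kgood k z q" and X: "Xgood x z q"
  shows "f x k z q - f (x*q) k z q = cc z q x"
proof -
  note X' = Xgood_shift[OF K X]
  have "(\<lambda>n. g k z q x (Suc n) - g k z q (x*q) (Suc n)) sums ((\<Sum>n. g k z q x (Suc n)) - (\<Sum>n. g k z q (x*q) (Suc n)))"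
    using summable_sums[OF g_summable[OF K X]] summable_sums[OF g_summable[OF K X']] by (rule sums_diff)
  then have "(\<Sum>n. g k z q x (Suc n)) - (\<Sum>n. g k z q (x*q) (Suc n)) = - Gt k z q x 0"
    using tele_sums[OF K X] sums_unique2 by blast
  then show ?thesis using f_eq[OF K X] f_eq[OF K X'] Gt0 by simp
qed

lemma Xgood_pow:
  assumes K: "Kgood k z q" and X: "Xgood x z q"
  shows "Xgood (x*q^m) z q"
proof (induction m)
  case 0 then show ?case using X by simp
next
  case (Suc m)
  have "x*q^Suc m = (x*q^m)*q" by (simp add: mult_ac)
  then show ?case using Xgood_shift[OF K Suc] by metis
qed

lemma partial_cc:
  assumes K: "Kgood k z q" and X: "Xgood x z q"
  shows "(\<Sum>m<M. cc z q (x*q^m)) = f x k z q - f (x*q^M) k z q"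
proof (induction M)
  case 0 then show ?case by simp
next
  case (Suc M)
  have "x*q^Suc M = (x*q^M)*q" by (simp add: mult_ac)
  have "(\<Sum>m<Suc M. cc z q (x*q^m)) = (\<Sum>m<M. cc z q (x*q^m)) + cc z q (x*q^M)" by simp
  also have "\<dots> = f x k z q - f (x*q^M) k z q + (f (x*q^M) k z q - f ((x*q^M)*q) k z q)"
    by (simp only: Suc f_step[OF K Xgood_pow[OF K X, of M]])
  also have "\<dots> = f x k z q - f (x*q^Suc M) k z q" by (simp add: mult_ac)
  finally show ?case .
qed

definition EE where "EE k z q n = (1 - k*(q^n)^2)/(1 - k*q^n) * (qpoch z q n / qpoch (q*k/z) q n) * (1/(1 - q^n)) * (q/z)^n"
definition UU where "UU k z q n y = EE k z q n * (\<Prod>j<n. y - k*q^j) / qpoch (q*y) q n"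
definition FF where "FF k z q y = (\<Sum>n. UU k z q (Suc n) y)"

lemma qpoch_ky: "y \<noteq> 0 \<Longrightarrow> qpoch (k/y) q n * y^n = (\<Prod>j<n. y - k*q^j)"
proof -
  assume y: "y \<noteq> 0"
  have "qpoch (k/y) q n * y^n = (\<Prod>j<n. (1 - k/y*q^j) * y)"
    unfolding qpoch_def prod.distrib by simp
  also have "\<dots> = (\<Prod>j<n. y - k*q^j)" using y by (intro prod.cong) (auto simp: field_simps)
  finally show ?thesis .
qed

lemma g_UU: "y \<noteq> 0 \<Longrightarrow> g k z q y n = UU k z q n y"
proof -
  assume y: "y \<noteq> 0"
  have "g k z q y n = (1 - k*(q^n)^2)/(1 - k*q^n) * (qpoch z q n / qpoch (q*k/z) q n) * (1/(1 - q^n)) * (q/z)^n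
        * (qpoch (k/y) q n * y^n) / qpoch (q*y) q n"
    unfolding g_def by (simp add: divide_inverse power_mult_distrib mult_ac)
  then show ?thesis unfolding UU_def EE_def qpoch_ky[OF y] .
qed

lemma qpoch_small_nz:
  assumes "norm (q::complex) < 1" "norm y < 1"
  shows "qpoch (q*y) q n \<noteq> 0"
proof -
  have "1 - q*y*q^j \<noteq> 0" for j
  proof
    assume "1 - q*y*q^j = 0"
    then have "norm (q*y*q^j) = 1" by (metis eq_iff_diff_eq_0 norm_one)
    moreover have "norm (q*y*q^j) < 1"
    proof -
      have eq: "norm (q*y*q^j) = norm y * (norm q * norm q ^ j)" by (simp add: norm_mult norm_power)
      have le1: "norm q * norm q ^ j \<le> 1" using assms(1)
        by (metis less_eq_real_def norm_ge_zero power_Suc power_le_one)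
      have "norm y * (norm q * norm q ^ j) \<le> norm y"
        using mult_left_le[OF le1 norm_ge_zero[of y]] .
      then show ?thesis using eq assms(2) by simp
    qed
    ultimately show False by simp
  qed
  then show ?thesis unfolding qpoch_def by simp
qed

lemma UU_cont:
  assumes "norm q < 1" "\<delta> \<le> 1"
  shows "continuous_on (ball 0 \<delta>) (UU k z q n)"
proof -
  have nz: "\<forall>y\<in>ball 0 \<delta>. qpoch (q*y) q n \<noteq> 0"
    using qpoch_small_nz[OF assms(1)] assms(2) by auto
  show ?thesis unfolding UU_def
    by (intro continuous_intros continuous_on_divide nz) (auto simp: qpoch_def intro!: continuous_intros)
qed

lemma EE_ratio_abstract:
  fixes N1 D1 Z a R b e w P f p i :: complex
  assumes "D1 \<noteq> 0" "b \<noteq> 0" "e \<noteq> 0" "p \<noteq> 0" "f \<noteq> 0" "i \<noteq> 0" "R \<noteq> 0"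
  shows "N1/D1 * (Z*a/(R*b)) * (1/e) * (w*P) = (N1*f/(D1*p) * a/b * i/e * w) * (p/f * (Z/R) * (1/i) * P)"
  using assms by (simp add: field_simps)

definition eE where "eE k z q m = (1 - k*(q*q^m)^2)*(1 - k*q^m)/((1 - k*(q*q^m))*(1 - k*(q^m)^2)) * (1 - z*q^m)/(1 - q*k/z*q^m)
           * (1 - q^m)/(1 - q*q^m) * (q/z)"

lemma EE_rec:
  assumes K: "Kgood k z q" and m: "m \<ge> 1"
  shows "EE k z q (Suc m) = eE k z q m * EE k z q m"
proof -
  note KF = Kgood_facts[OF K]
  have f: "1 - k*q^m \<noteq> 0" using KF(2)[of "m-1"] m by simp
  have i: "1 - q^m \<noteq> 0" using q_nz[OF KF(6) m] .
  have e: "1 - q*q^m \<noteq> 0" using q_nz[OF KF(6), of "Suc m"] by simp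
  have D1: "1 - k*(q*q^m) \<noteq> 0" using KF(2)[of m] by simp
  show ?thesis unfolding EE_def eE_def qpoch_Suc power_Suc
    by (rule EE_ratio_abstract) (use D1 KF(3)[of m] e KF(1)[of m] f i KF(10) in auto)
qed

definition Mb0 where "Mb0 k z q \<delta> n = norm (EE k z q n) * (\<Prod>j<n. \<delta> + norm k * norm q ^ j) / (\<Prod>j<n. 1 - \<delta> * norm q ^ Suc j)"

lemma den_pos:
  assumes "norm (q::complex) < 1" "0 < \<delta>" "\<delta> \<le> 1"
  shows "0 < 1 - \<delta> * norm q ^ Suc j"
proof -
  have "norm q ^ Suc j \<le> norm q ^ 1" using assms(1) by (intro power_decreasing) auto
  then have a: "norm q ^ Suc j < 1" using assms(1) by simp
  have "\<delta> * norm q ^ Suc j \<le> norm q ^ Suc j"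
    using assms(2,3) by (intro mult_left_le_one_le) auto
  then have "\<delta> * norm q ^ Suc j < 1" using a by linarith
  then show ?thesis by simp
qed

lemma UU_bound:
  assumes "norm q < 1" "0 < \<delta>" "\<delta> \<le> 1" and y: "y \<in> ball 0 \<delta>"
  shows "norm (UU k z q n y) \<le> Mb0 k z q \<delta> n"
proof -
  have ny: "norm y < \<delta>" using y by simp
  have eq: "norm (UU k z q n y) = norm (EE k z q n) * (\<Prod>j<n. norm (y - k*q^j)) / (\<Prod>j<n. norm (1 - q*y*q^j))"
    unfolding UU_def qpoch_def by (simp add: norm_mult norm_divide prod_norm)
  have A: "(\<Prod>j<n. norm (y - k*q^j)) \<le> (\<Prod>j<n. \<delta> + norm k * norm q ^ j)"
  proof (rule prod_mono)
    fix j
    have "norm (y - k*q^j) \<le> norm y + norm (k*q^j)" by (rule norm_triangle_ineq4)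
    also have "\<dots> \<le> \<delta> + norm k * norm q ^ j" using ny by (simp add: norm_mult norm_power)
    finally show "0 \<le> norm (y - k*q^j) \<and> norm (y - k*q^j) \<le> \<delta> + norm k * norm q ^ j" by simp
  qed
  have B: "(\<Prod>j<n. 1 - \<delta> * norm q ^ Suc j) \<le> (\<Prod>j<n. norm (1 - q*y*q^j))"
  proof (rule prod_mono)
    fix j
    have "norm (q*y*q^j) = norm y * norm q ^ Suc j" by (simp add: norm_mult norm_power)
    also have "\<dots> \<le> \<delta> * norm q ^ Suc j" using ny by (intro mult_right_mono) auto
    finally have "1 - \<delta> * norm q ^ Suc j \<le> norm (1::complex) - norm (q*y*q^j)" by simp
    also have "\<dots> \<le> norm (1 - q*y*q^j)" by (rule norm_triangle_ineq2)
    finally show "0 \<le> 1 - \<delta> * norm q ^ Suc j \<and> 1 - \<delta> * norm q ^ Suc j \<le> norm (1 - q*y*q^j)"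
      using den_pos[OF assms(1-3), of j] by simp
  qed
  have Bp: "0 < (\<Prod>j<n. 1 - \<delta> * norm q ^ Suc j)"
    using den_pos[OF assms(1-3)] by (intro prod_pos) auto
  have "norm (EE k z q n) * (\<Prod>j<n. norm (y - k*q^j)) / (\<Prod>j<n. norm (1 - q*y*q^j))
     \<le> norm (EE k z q n) * (\<Prod>j<n. \<delta> + norm k * norm q ^ j) / (\<Prod>j<n. 1 - \<delta> * norm q ^ Suc j)"
  proof (rule frac_le)
    show "0 \<le> norm (EE k z q n) * (\<Prod>j<n. \<delta> + norm k * norm q ^ j)"
      using assms(2) by (intro mult_nonneg_nonneg prod_nonneg) auto
    show "norm (EE k z q n) * (\<Prod>j<n. norm (y - k*q^j)) \<le> norm (EE k z q n) * (\<Prod>j<n. \<delta> + norm k * norm q ^ j)"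
      using A by (intro mult_left_mono) auto
    show "0 < (\<Prod>j<n. 1 - \<delta> * norm q ^ Suc j)" by (rule Bp)
    show "(\<Prod>j<n. 1 - \<delta> * norm q ^ Suc j) \<le> (\<Prod>j<n. norm (1 - q*y*q^j))" by (rule B)
  qed
  then show ?thesis unfolding eq Mb0_def .
qed

lemma Mb_summable:
  assumes K: "Kgood k z q" and d: "0 < \<delta>" "\<delta> \<le> 1" "\<delta> \<le> norm z / 2"
  shows "summable (\<lambda>n. Mb0 k z q \<delta> (Suc n))"
proof -
  note KF = Kgood_facts[OF K]
  define r where "r n = norm (eE k z q (Suc n)) * (\<delta> + norm k * norm q ^ Suc n) / (1 - \<delta> * norm q ^ Suc (Suc n))" for n
  have rec: "Mb0 k z q \<delta> (Suc (Suc n)) = r n * Mb0 k z q \<delta> (Suc n)" for n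
  proof -
    have b: "1 - \<delta> * norm q ^ Suc (Suc n) \<noteq> 0" using den_pos[OF KF(6) d(1,2), of "Suc n"] by simp
    have B: "(\<Prod>j<Suc n. 1 - \<delta> * norm q ^ Suc j) \<noteq> 0"
      using den_pos[OF KF(6) d(1,2)] by (intro prod_pos[THEN less_imp_neq, THEN not_sym]) auto
    show ?thesis
      unfolding Mb0_def r_def EE_rec[OF K, of "Suc n", simplified] prod.lessThan_Suc[of _ "Suc n"]
      using b B by (simp add: norm_mult field_simps)
  qed
  have q0: "(\<lambda>n. q^(Suc n)) \<longlonglongrightarrow> 0"
    using LIMSEQ_Suc[OF LIMSEQ_power_zero[OF KF(6)]] .
  have nq0: "(\<lambda>n. norm q ^ (Suc n)) \<longlonglongrightarrow> 0"
    using LIMSEQ_Suc[OF LIMSEQ_power_zero[of "norm q"]] KF(6) by simp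
  have nq1: "(\<lambda>n. norm q ^ (Suc (Suc n))) \<longlonglongrightarrow> 0"
    using LIMSEQ_Suc[OF nq0] .
  have "(\<lambda>n. eE k z q (Suc n)) \<longlonglongrightarrow> (1 - k*(q*0)^2)*(1 - k*0)/((1 - k*(q*0))*(1 - k*0^2)) * (1 - z*0)/(1 - q*k/z*0)
           * (1 - 0)/(1 - q*0) * (q/z)"
    unfolding eE_def by (intro tendsto_intros q0) auto
  then have e0: "(\<lambda>n. eE k z q (Suc n)) \<longlonglongrightarrow> q/z" by simp
  have "r \<longlonglongrightarrow> norm (q/z) * (\<delta> + norm k * 0) / (1 - \<delta> * 0)"
    unfolding r_def by (intro tendsto_intros e0 nq0 nq1) auto
  then have lim: "r \<longlonglongrightarrow> norm (q/z) * \<delta>" by simp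
  have "norm (q/z) * \<delta> \<le> norm (q/z) * (norm z / 2)" using d by (intro mult_left_mono) auto
  also have "\<dots> = norm q / 2" using KF(8) by (simp add: norm_divide)
  also have "\<dots> < 1" using KF(6) by simp
  finally have "norm (norm (q/z) * \<delta>) < 1" using d by simp
  then show ?thesis using ratio_summable[of "\<lambda>n. Mb0 k z q \<delta> (Suc n)", OF rec lim] by blast
qed

lemma FF_cont:
  assumes K: "Kgood k z q" and d: "0 < \<delta>" "\<delta> \<le> 1" "\<delta> \<le> norm z / 2"
  shows "continuous_on (ball 0 \<delta>) (FF k z q)"
proof -
  note KF = Kgood_facts[OF K]
  have ul: "uniform_limit (ball 0 \<delta>) (\<lambda>n y. \<Sum>i<n. UU k z q (Suc i) y) (\<lambda>y. \<Sum>i. UU k z q (Suc i) y) sequentially"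
    by (rule Weierstrass_m_test[OF UU_bound[OF KF(6) d(1,2)] Mb_summable[OF K d]])
  have ff: "FF k z q = (\<lambda>y. \<Sum>i. UU k z q (Suc i) y)" by (rule ext) (simp add: FF_def)
  show ?thesis unfolding ff
    by (rule uniform_limit_theorem[OF _ ul])
       (auto intro!: always_eventually continuous_on_sum UU_cont[OF KF(6) d(2)])
qed

lemma f_lim:
  assumes K: "Kgood k z q" and X: "Xgood x z q"
  shows "(\<lambda>M. f (x*q^M) k z q) \<longlonglongrightarrow> FF k z q 0"
proof -
  note KF = Kgood_facts[OF K]
  define \<delta> where "\<delta> = min 1 (norm z / 2)"
  have d: "0 < \<delta>" "\<delta> \<le> 1" "\<delta> \<le> norm z / 2" using KF(8) by (auto simp: \<delta>_def)
  have eqf: "f (x*q^M) k z q = FF k z q (x*q^M)" for M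
  proof -
    have XM: "Xgood (x*q^M) z q" by (rule Xgood_pow[OF K X])
    have "x*q^M \<noteq> 0" using Xgood_facts(2)[OF XM] .
    then show ?thesis using f_eq[OF K XM] g_UU by (simp add: FF_def)
  qed
  have t: "(\<lambda>M. x*q^M) \<longlonglongrightarrow> 0"
    using tendsto_mult_right_zero[OF LIMSEQ_power_zero[OF KF(6)], of x] .
  have ev: "eventually (\<lambda>M. x*q^M \<in> ball 0 \<delta>) sequentially"
    using tendstoD[OF t d(1)] by (simp add: dist_commute)
  have "(\<lambda>M. FF k z q (x*q^M)) \<longlonglongrightarrow> FF k z q 0"
    by (rule continuous_on_tendsto_compose[OF FF_cont[OF K d] t _ ev]) (use d in simp)
  then show ?thesis by (simp add: eqf)
qed

lemma main_sums:
  assumes K: "Kgood k z q" and X: "Xgood x z q"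
  shows "(\<lambda>m. cc z q (x*q^m)) sums (f x k z q - FF k z q 0)"
  unfolding sums_def partial_cc[OF K X]
  by (intro tendsto_intros f_lim[OF K X])

lemma f_self:
  assumes "k \<noteq> 0"
  shows "f k k z q = 0"
proof -
  have "f_term k k z q (Suc n) = 0" for n
    using assms by (simp add: f_term_def qpoch_Suc')
  then show ?thesis by (simp add: f_def)
qed

theorem lemma2p2:
  fixes a k z q :: complex
  assumes "norm q < 1" and "a \<noteq> 0" and "k \<noteq> 0"
    and "norm (q * a) < norm z" and "norm (q * k) < norm z"
    and "\<And>n. n \<ge> 1 \<Longrightarrow> qpoch (csqrt k) q n \<noteq> 0 \<and> qpoch (- csqrt k) q n \<noteq> 0
            \<and> qpoch (q * k) q n \<noteq> 0 \<and> qpoch (q * k / z) q n \<noteq> 0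
            \<and> qpoch (q * a) q n \<noteq> 0 \<and> 1 - q ^ n \<noteq> 0"
    and "\<And>n. n \<ge> 1 \<Longrightarrow> qpoch (csqrt a) q n \<noteq> 0 \<and> qpoch (- csqrt a) q n \<noteq> 0
            \<and> qpoch (q * a) q n \<noteq> 0 \<and> qpoch (q * a / z) q n \<noteq> 0
            \<and> qpoch (q * k) q n \<noteq> 0 \<and> 1 - q ^ n \<noteq> 0"
  shows "f a k z q = - f k a z q"
proof (cases "q = 0")
  case True
  then show ?thesis by (simp add: f_def f_term_def)
next
  case False
  have z: "z \<noteq> 0" using assms(4) by auto
  have H1: "qpoch (csqrt k) q n \<noteq> 0 \<and> qpoch (- csqrt k) q n \<noteq> 0
            \<and> qpoch (q * k) q n \<noteq> 0 \<and> qpoch (q * k / z) q n \<noteq> 0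
            \<and> qpoch (q * a) q n \<noteq> 0" for n
    using assms(6)[of n] by (cases n) auto
  have H2: "qpoch (csqrt a) q n \<noteq> 0 \<and> qpoch (- csqrt a) q n \<noteq> 0
            \<and> qpoch (q * a) q n \<noteq> 0 \<and> qpoch (q * a / z) q n \<noteq> 0
            \<and> qpoch (q * k) q n \<noteq> 0" for n
    using assms(7)[of n] by (cases n) auto
  have Kk: "Kgood k z q" unfolding Kgood_def using False assms(1,3,5) z H1 by auto
  have Ka: "Kgood a z q" unfolding Kgood_def using False assms(1,2,4) z H2 by auto
  have Xa: "Xgood a z q" unfolding Xgood_def using assms(2,4) H1 by auto
  have Xk: "Xgood k z q" unfolding Xgood_def using assms(3,5) H1 by auto
  have s1: "(\<lambda>m. cc z q (a*q^m)) sums (f a k z q - FF k z q 0)" by (rule main_sums[OF Kk Xa])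
  have s2: "(\<lambda>m. cc z q (k*q^m)) sums (f k k z q - FF k z q 0)" by (rule main_sums[OF Kk Xk])
  have s3: "(\<lambda>m. cc z q (k*q^m)) sums (f k a z q - FF a z q 0)" by (rule main_sums[OF Ka Xk])
  have s4: "(\<lambda>m. cc z q (a*q^m)) sums (f a a z q - FF a z q 0)" by (rule main_sums[OF Ka Xa])
  have e1: "f a k z q - FF k z q 0 = f a a z q - FF a z q 0" using sums_unique2[OF s1 s4] .
  have e2: "f k k z q - FF k z q 0 = f k a z q - FF a z q 0" using sums_unique2[OF s2 s3] .
  have "f a k z q + f k a z q = 0" using e1 e2 f_self[OF assms(2)] f_self[OF assms(3)] by (simp add: algebra_simps)
  then show ?thesis by (simp add: eq_neg_iff_add_eq_0)
qed

end
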